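(* Let $O^4$ be the set of odd-parity 4-bit strings, let $u\in O^4$ and let $u'$ be its bitwise complement ($u\oplus u'=1111$). Let $n\ge1$ and let four parties (the first being Alice) hold $X_j=(x^j_1,\dots,x^j_n)\in\{0,1\}^n$, $j=1,\dots,4$, under the promise that $x_i^1x_i^2x_i^3x_i^4\in A$ for all $i$, where $A\subseteq O^4$ is any fixed set. Let $f_{\{u,u'\}}(X_1,X_2,X_3,X_4)=\bigoplus_{i=1}^n\big(t_u(x_i^1x_i^2x_i^3x_i^4)\oplus t_{u'}(x_i^1x_i^2x_i^3x_i^4)\big)$, where $t_w(y)=1$ if $y=w$ and $0$ otherwise. Suppose the parties share $n$ copies of $|\psi_4\rangle=2^{-3/2}\big(\sum_{|v|=1}|v\rangle-\sum_{|v|=3}|v\rangle\big)$ ($v\in\{0,1\}^4$, $|v|$ the Hamming weight), the $j$-th qubit of each copy held by party $j$. Then, using local operations in which party $j$ applies $H$ to its qubit of the $i$-th copy if $x_i^j\ne u_j$ and the identity otherwise, followed by computational-basis measurements and local classical computation, Alice can obtain $f_{\{u,u'\}}(X_1,X_2,X_3,X_4)$ with only three classical bits of communication in total.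
   Context: $H$ is the Hadamard gate. Communication consists only of classical bits sent to Alice; no quantum communication is allowed. *)

theory Defs
  imports Complex_Main
begin

text \<open>Bits are booleans (True = 1), XOR is (\<noteq>). A 4-bit string is a bool list
 of length 4; entry j (0-based) belongs to party j+1; party index 0 is Alice.\<close>

definition weight :: "bool list \<Rightarrow> nat" where
  "weight v = length (filter id v)"

definition bits4 :: "bool list set" where
  "bits4 = {v. length v = 4}"

definition O4 :: "bool list set" where
  "O4 = {v. length v = 4 \<and> odd (weight v)}"

definition tw :: "bool list \<Rightarrow> bool list \<Rightarrow> bool" where
  "tw w y = (y = w)"

primrec xor_sum :: "nat \<Rightarrow> (nat \<Rightarrow> bool) \<Rightarrow> bool" where
  "xor_sum 0 g = False"
| "xor_sum (Suc k) g = (xor_sum k g \<noteq> g k)"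

definition psi4 :: "bool list \<Rightarrow> complex" where
  "psi4 v = (if weight v = 1 then 1 else if weight v = 3 then -1 else 0)
              / complex_of_real (2 powr (3/2))"

definition hadamard :: "bool \<Rightarrow> bool \<Rightarrow> complex" where
  "hadamard a b = (if a \<and> b then -1 else 1) / complex_of_real (sqrt 2)"

definition local_gate :: "bool \<Rightarrow> bool \<Rightarrow> bool \<Rightarrow> complex" where
  "local_gate applyH a b = (if applyH then hadamard a b else (if a = b then 1 else 0))"

text \<open>Amplitude <w| (G_1 \<otimes> G_2 \<otimes> G_3 \<otimes> G_4) |psi_4> for one copy,
  where party j applies H iff hs!j.\<close>
definition copy_amp :: "bool list \<Rightarrow> bool list \<Rightarrow> complex" where
  "copy_amp hs w = (\<Sum>v\<in>bits4. (\<Prod>j<4. local_gate (hs!j) (w!j) (v!j)) * psi4 v)"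

text \<open>Inputs/outcomes: X j i is bit i of party j (j = 0..3, i = 0..n-1).\<close>
definition at4 :: "(nat \<Rightarrow> nat \<Rightarrow> bool) \<Rightarrow> nat \<Rightarrow> bool list" where
  "at4 X i = [X 0 i, X 1 i, X 2 i, X 3 i]"

definition H_flags :: "bool list \<Rightarrow> bool list \<Rightarrow> bool list" where
  "H_flags u y = map (\<lambda>j. y!j \<noteq> u!j) [0..<4]"

definition outcome_prob ::
  "bool list \<Rightarrow> nat \<Rightarrow> (nat \<Rightarrow> nat \<Rightarrow> bool) \<Rightarrow> (nat \<Rightarrow> nat \<Rightarrow> bool) \<Rightarrow> real" where
  "outcome_prob u n X m = (cmod (\<Prod>i<n. copy_amp (H_flags u (at4 X i)) (at4 m i)))\<^sup>2"

definition f_pair :: "bool list \<Rightarrow> bool list \<Rightarrow> nat \<Rightarrow> (nat \<Rightarrow> nat \<Rightarrow> bool) \<Rightarrow> bool" where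
  "f_pair u u' n X = xor_sum n (\<lambda>i. tw u (at4 X i) \<noteq> tw u' (at4 X i))"

end

theory Submission
  imports Defs
begin

definition gi :: "bool \<Rightarrow> bool \<Rightarrow> bool \<Rightarrow> int" where
  "gi h a b = (if h then (if a \<and> b then -1 else 1) else (if a = b then 1 else 0))"

definition sc :: "bool \<Rightarrow> complex" where
  "sc h = (if h then 1 / complex_of_real (sqrt 2) else 1)"

definition pin :: "bool list \<Rightarrow> int" where
  "pin v = (if weight v = 1 then 1 else if weight v = 3 then -1 else 0)"

definition all4 :: "bool list list" where
  "all4 = [[a,b,c,d]. a \<leftarrow> [False,True], b \<leftarrow> [False,True], c \<leftarrow> [False,True], d \<leftarrow> [False,True]]"

definition int_amp :: "bool list \<Rightarrow> bool list \<Rightarrow> int" where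
  "int_amp hs w = sum_list (map (\<lambda>v. (\<Prod>j\<leftarrow>[0..<4]. gi (hs!j) (w!j) (v!j)) * pin v) all4)"

lemma lg: "local_gate h a b = of_int (gi h a b) * sc h"
  by (simp add: local_gate_def hadamard_def gi_def sc_def)

lemma len4: "length v = 4 \<longleftrightarrow> (\<exists>a b c d. v = [a,b,c,d])"
  by (auto simp: numeral_eq_Suc length_Suc_conv)

lemma bits4_eq: "bits4 = set all4"
proof
  show "bits4 \<subseteq> set all4"
  proof
    fix v assume "v \<in> bits4"
    then obtain a b c d where "v = [a,b,c,d]" using len4[of v] unfolding bits4_def by blast
    then show "v \<in> set all4" by (cases a; cases b; cases c; cases d) (simp_all add: all4_def)
  qed
  show "set all4 \<subseteq> bits4" by (auto simp: all4_def bits4_def)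
qed

lemma distinct_all4: "distinct all4" by (simp add: all4_def)

lemma p4: "(\<Prod>j<(4::nat). f j) = f 0 * f 1 * f 2 * (f 3::int)"
  by (simp add: numeral_eq_Suc lessThan_Suc mult_ac)

lemma pl4: "(\<Prod>j\<leftarrow>[0..<4]. f j) = f 0 * f 1 * f 2 * (f 3::int)"
  by (simp add: numeral_eq_Suc mult_ac)

lemma copy_amp_eq:
  "copy_amp hs w = (\<Prod>j<4. sc (hs!j)) / complex_of_real (2 powr (3/2)) * of_int (int_amp hs w)"
proof -
  have "copy_amp hs w = (\<Sum>v\<in>bits4. ((\<Prod>j<4. sc (hs!j)) / complex_of_real (2 powr (3/2)))
           * of_int ((\<Prod>j<4. gi (hs!j) (w!j) (v!j)) * pin v))"
    unfolding copy_amp_def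
    by (rule sum.cong) (simp_all add: lg prod.distrib psi4_def pin_def)
  also have "\<dots> = ((\<Prod>j<4. sc (hs!j)) / complex_of_real (2 powr (3/2)))
        * of_int (\<Sum>v\<in>bits4. (\<Prod>j<4. gi (hs!j) (w!j) (v!j)) * pin v)"
    by (simp add: sum_distrib_left)
  also have "(\<Sum>v\<in>bits4. (\<Prod>j<4. gi (hs!j) (w!j) (v!j)) * pin v) = int_amp hs w"
    unfolding int_amp_def bits4_eq sum.distinct_set_conv_list[OF distinct_all4]
    by (simp add: p4 pl4)
  finally show ?thesis .
qed

definition O4l :: "bool list list" where
  "O4l = filter (\<lambda>v. odd (weight v)) all4"

lemma O4_eq: "O4 = set O4l"
  using bits4_eq unfolding O4_def O4l_def bits4_def by auto

lemma check:
  "\<forall>u\<in>set O4l. \<forall>y\<in>set O4l. \<forall>w\<in>set all4.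
     int_amp (H_flags u y) w \<noteq> 0 \<longrightarrow> odd (weight w) = (y = u \<or> y = map Not u)"
  by code_simp

lemma xor_sum_cong: "(\<And>i. i < n \<Longrightarrow> f i = g i) \<Longrightarrow> xor_sum n f = xor_sum n g"
  by (induction n) auto

lemma xor_sum_xor: "xor_sum n (\<lambda>i. f i \<noteq> g i) = (xor_sum n f \<noteq> xor_sum n g)"
  by (induction n) auto

lemma odd_weight4: "odd (weight [a,b,c,d]) = (((a \<noteq> b) \<noteq> c) \<noteq> d)"
  by (cases a; cases b; cases c; cases d) (simp_all add: weight_def)

lemma key:
  assumes "u \<in> O4" "y \<in> O4" "length w = 4" "copy_amp (H_flags u y) w \<noteq> 0"
  shows "odd (weight w) = (y = u \<or> y = map Not u)"
proof -
  have "int_amp (H_flags u y) w \<noteq> 0" using assms(4) by (auto simp: copy_amp_eq)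
  moreover have "w \<in> set all4" using assms(3) bits4_eq bits4_def by auto
  ultimately show ?thesis using check assms(1,2) O4_eq by blast
qed

theorem corollary1:
  fixes u u' :: "bool list" and A :: "bool list set" and n :: nat
  assumes "u \<in> O4" and "u' = map Not u" and "A \<subseteq> O4" and "n \<ge> 1"
  shows "\<exists>(send :: nat \<Rightarrow> (nat \<Rightarrow> bool) \<Rightarrow> (nat \<Rightarrow> bool) \<Rightarrow> bool)
           (dec :: (nat \<Rightarrow> bool) \<Rightarrow> (nat \<Rightarrow> bool) \<Rightarrow> bool \<Rightarrow> bool \<Rightarrow> bool \<Rightarrow> bool).
         \<forall>(X :: nat \<Rightarrow> nat \<Rightarrow> bool) (m :: nat \<Rightarrow> nat \<Rightarrow> bool).
           (\<forall>i<n. at4 X i \<in> A) \<longrightarrow> outcome_prob u n X m > 0 \<longrightarrow>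
           dec (X 0) (m 0) (send 1 (X 1) (m 1)) (send 2 (X 2) (m 2)) (send 3 (X 3) (m 3))
             = f_pair u u' n X"
proof (intro exI allI impI)
  fix X m :: "nat \<Rightarrow> nat \<Rightarrow> bool"
  assume XA: "\<forall>i<n. at4 X i \<in> A" and pos: "outcome_prob u n X m > 0"
  have nz: "copy_amp (H_flags u (at4 X i)) (at4 m i) \<noteq> 0" if "i < n" for i
  proof
    assume "copy_amp (H_flags u (at4 X i)) (at4 m i) = 0"
    then have "(\<Prod>i<n. copy_amp (H_flags u (at4 X i)) (at4 m i)) = 0"
      using that by (auto simp: prod_zero_iff)
    then show False using pos by (simp add: outcome_prob_def)
  qed
  have ulen: "length u = 4" using assms(1) by (simp add: O4_def)
  have uu: "u \<noteq> u'" using ulen assms(2) by (cases u) auto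
  have term_eq: "(tw u (at4 X i) \<noteq> tw u' (at4 X i)) =
      (((m 0 i \<noteq> m 1 i) \<noteq> m 2 i) \<noteq> m 3 i)" if "i < n" for i
  proof -
    have "at4 X i \<in> O4" using XA assms(3) that by auto
    from key[OF assms(1) this _ nz[OF that]]
    have "odd (weight (at4 m i)) = (at4 X i = u \<or> at4 X i = u')"
      using assms(2) by (simp add: at4_def)
    then show ?thesis using uu by (auto simp: tw_def at4_def odd_weight4)
  qed
  show "(\<lambda>x0 m0 b1 b2 b3. ((xor_sum n m0 \<noteq> b1) \<noteq> b2) \<noteq> b3) (X 0) (m 0)
      ((\<lambda>j xj mj. xor_sum n mj) 1 (X 1) (m 1)) ((\<lambda>j xj mj. xor_sum n mj) 2 (X 2) (m 2))
      ((\<lambda>j xj mj. xor_sum n mj) 3 (X 3) (m 3)) = f_pair u u' n X"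
  proof -
    have "f_pair u u' n X = xor_sum n (\<lambda>i. ((m 0 i \<noteq> m 1 i) \<noteq> m 2 i) \<noteq> m 3 i)"
      unfolding f_pair_def by (rule xor_sum_cong) (rule term_eq)
    then show ?thesis by (simp only: xor_sum_xor)
  qed
qed

end
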